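(* Let $p\in\Delta_7$ have at least one vanishing entry. Then $p\in\operatorname{RBM}_{3,2}$ if and only if for every state $x\in\{0,1\}^3$ with $p_x=0$ there is a Hamming neighbour $y$ of $x$ with $p_y=0$.
   Context: A distribution of three binary random variables is a $2\times2\times2$ tensor $p=(p_x)_{x\in\{0,1\}^3}$ with nonnegative entries summing to $1$; the set of these is $\Delta_7$. Two states are Hamming neighbours if they differ in exactly one coordinate. For $a,b,c\in\mathbb{R}^2_{\ge0}$, $a\otimes b\otimes c$ is the tensor with entries $a_ib_jc_k$. $\operatorname{RBM}_{3,2}$ is the set of $p\in\Delta_7$ of the form $p=(a_1\otimes b_1\otimes c_1+d_1\otimes e_1\otimes f_1)*(a_2\otimes b_2\otimes c_2+d_2\otimes e_2\otimes f_2)$ with all vectors in $\mathbb{R}^2_{\ge0}$, where $*$ is the entrywise (Hadamard) product. *)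

theory Defs
  imports Complex_Main
begin

text \<open>States of three binary variables: x = (x1,x2,x3) in {0,1}^3, with bool encoding {0,1}
  (False = 0, True = 1). A distribution is a real function on states.\<close>

type_synonym state3 = "bool \<times> bool \<times> bool"

definition simplex7 :: "(state3 \<Rightarrow> real) set" where
  "simplex7 = {p. (\<forall>x. 0 \<le> p x) \<and> (\<Sum>x\<in>UNIV. p x) = 1}"

definition hamming_neighbour :: "state3 \<Rightarrow> state3 \<Rightarrow> bool" where
  "hamming_neighbour x y \<longleftrightarrow>
     card {i::nat. i < 3 \<and> [fst x, fst (snd x), snd (snd x)] ! i \<noteq> [fst y, fst (snd y), snd (snd y)] ! i} = 1"

definition nonneg2 :: "(bool \<Rightarrow> real) \<Rightarrow> bool" where
  "nonneg2 a \<longleftrightarrow> (\<forall>i. 0 \<le> a i)"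

definition tensor3 :: "(bool \<Rightarrow> real) \<Rightarrow> (bool \<Rightarrow> real) \<Rightarrow> (bool \<Rightarrow> real) \<Rightarrow> state3 \<Rightarrow> real" where
  "tensor3 a b c = (\<lambda>(i, j, k). a i * b j * c k)"

definition RBM32 :: "(state3 \<Rightarrow> real) set" where
  "RBM32 = {p. p \<in> simplex7 \<and>
     (\<exists>a1 b1 c1 d1 e1 f1 a2 b2 c2 d2 e2 f2.
        nonneg2 a1 \<and> nonneg2 b1 \<and> nonneg2 c1 \<and> nonneg2 d1 \<and> nonneg2 e1 \<and> nonneg2 f1 \<and>
        nonneg2 a2 \<and> nonneg2 b2 \<and> nonneg2 c2 \<and> nonneg2 d2 \<and> nonneg2 e2 \<and> nonneg2 f2 \<and>
        (\<forall>x. p x = (tensor3 a1 b1 c1 x + tensor3 d1 e1 f1 x) * (tensor3 a2 b2 c2 x + tensor3 d2 e2 f2 x)))}"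

end

theory Submission
  imports Defs
begin

definition rep :: "(state3 \<Rightarrow> real) \<Rightarrow> bool" where
  "rep p \<longleftrightarrow> (\<exists>a1 b1 c1 d1 e1 f1 a2 b2 c2 d2 e2 f2.
        nonneg2 a1 \<and> nonneg2 b1 \<and> nonneg2 c1 \<and> nonneg2 d1 \<and> nonneg2 e1 \<and> nonneg2 f1 \<and>
        nonneg2 a2 \<and> nonneg2 b2 \<and> nonneg2 c2 \<and> nonneg2 d2 \<and> nonneg2 e2 \<and> nonneg2 f2 \<and>
        (\<forall>x. p x = (tensor3 a1 b1 c1 x + tensor3 d1 e1 f1 x) * (tensor3 a2 b2 c2 x + tensor3 d2 e2 f2 x)))"

lemma RBM32_rep: "RBM32 = {p. p \<in> simplex7 \<and> rep p}"
  unfolding RBM32_def rep_def by simp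

definition s12 :: "(state3 \<Rightarrow> real) \<Rightarrow> state3 \<Rightarrow> real" where
  "s12 p = (\<lambda>(i,j,k). p (j,i,k))"
definition s23 :: "(state3 \<Rightarrow> real) \<Rightarrow> state3 \<Rightarrow> real" where
  "s23 p = (\<lambda>(i,j,k). p (i,k,j))"

lemma rep_s12: assumes "rep (s12 p)" shows "rep p"
proof -
  from assms obtain a1 b1 c1 d1 e1 f1 a2 b2 c2 d2 e2 f2 where
    n: "nonneg2 a1" "nonneg2 b1" "nonneg2 c1" "nonneg2 d1" "nonneg2 e1" "nonneg2 f1"
       "nonneg2 a2" "nonneg2 b2" "nonneg2 c2" "nonneg2 d2" "nonneg2 e2" "nonneg2 f2"
    and e: "\<forall>x. s12 p x = (tensor3 a1 b1 c1 x + tensor3 d1 e1 f1 x) * (tensor3 a2 b2 c2 x + tensor3 d2 e2 f2 x)"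
    unfolding rep_def by (elim exE conjE) (rule that; assumption)
  show ?thesis unfolding rep_def
  proof (intro exI conjI)
    show "\<forall>x. p x = (tensor3 b1 a1 c1 x + tensor3 e1 d1 f1 x) * (tensor3 b2 a2 c2 x + tensor3 e2 d2 f2 x)"
    proof
      fix x :: state3
      obtain i j k where x: "x = (i,j,k)" by (cases x) auto
      have "s12 p (j,i,k) = p x" by (simp add: s12_def x)
      then show "p x = (tensor3 b1 a1 c1 x + tensor3 e1 d1 f1 x) * (tensor3 b2 a2 c2 x + tensor3 e2 d2 f2 x)"
        using e[rule_format, of "(j,i,k)"] by (simp add: x tensor3_def ac_simps)
    qed
  qed (use n in auto)
qed

lemma rep_s23: assumes "rep (s23 p)" shows "rep p"
proof -
  from assms obtain a1 b1 c1 d1 e1 f1 a2 b2 c2 d2 e2 f2 where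
    n: "nonneg2 a1" "nonneg2 b1" "nonneg2 c1" "nonneg2 d1" "nonneg2 e1" "nonneg2 f1"
       "nonneg2 a2" "nonneg2 b2" "nonneg2 c2" "nonneg2 d2" "nonneg2 e2" "nonneg2 f2"
    and e: "\<forall>x. s23 p x = (tensor3 a1 b1 c1 x + tensor3 d1 e1 f1 x) * (tensor3 a2 b2 c2 x + tensor3 d2 e2 f2 x)"
    unfolding rep_def by (elim exE conjE) (rule that; assumption)
  show ?thesis unfolding rep_def
  proof (intro exI conjI)
    show "\<forall>x. p x = (tensor3 a1 c1 b1 x + tensor3 d1 f1 e1 x) * (tensor3 a2 c2 b2 x + tensor3 d2 f2 e2 x)"
    proof
      fix x :: state3
      obtain i j k where x: "x = (i,j,k)" by (cases x) auto
      have "s23 p (i,k,j) = p x" by (simp add: s23_def x)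
      then show "p x = (tensor3 a1 c1 b1 x + tensor3 d1 f1 e1 x) * (tensor3 a2 c2 b2 x + tensor3 d2 f2 e2 x)"
        using e[rule_format, of "(i,k,j)"] by (simp add: x tensor3_def ac_simps)
    qed
  qed (use n in auto)
qed

definition TAc :: "(state3 \<Rightarrow> real) \<Rightarrow> bool \<Rightarrow> bool \<Rightarrow> bool" where
  "TAc p u v \<longleftrightarrow> (\<forall>k. p (u, \<not>v, k) = 0) \<and> (\<forall>k. p (\<not>u, v, k) = 0 \<longrightarrow> p (u, v, k) = 0)"

definition TBc :: "(state3 \<Rightarrow> real) \<Rightarrow> bool \<Rightarrow> bool \<Rightarrow> bool" where
  "TBc p a b \<longleftrightarrow> (\<forall>k. p (a, \<not>b, k) = 0 \<and> p (\<not>a, b, k) = 0)"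

lemma TA_rep:
  assumes nn: "\<forall>x. 0 \<le> p x" and c: "TAc p u v"
  shows "rep p"
  unfolding rep_def
proof (intro exI conjI)
  show "\<forall>x. p x = (tensor3 (\<lambda>i. if i = u then 0 else 1) (\<lambda>_. 1) (\<lambda>_. 1) x
        + tensor3 (\<lambda>i. if i = u then 1 else 0) (\<lambda>j. if j = v then 1 else 0) (\<lambda>k. p (u,v,k) / p (\<not>u,v,k)) x)
      * (tensor3 (\<lambda>_. 1) (\<lambda>j. if j then 0 else 1) (\<lambda>k. p (\<not>u,False,k)) x
        + tensor3 (\<lambda>_. 1) (\<lambda>j. if j then 1 else 0) (\<lambda>k. p (\<not>u,True,k)) x)"
  proof
    fix x :: state3
    obtain i j k where x: "x = (i,j,k)" by (cases x) auto
    have h1: "p (u, \<not>v, k) = 0" and h2: "p (\<not>u, v, k) = 0 \<longrightarrow> p (u, v, k) = 0"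
      using c unfolding TAc_def by auto
    have T2: "tensor3 (\<lambda>_. 1) (\<lambda>j. if j then 0 else 1) (\<lambda>k. p (\<not>u,False,k)) x
        + tensor3 (\<lambda>_. 1) (\<lambda>j. if j then 1 else 0) (\<lambda>k. p (\<not>u,True,k)) x = p (\<not>u, j, k)"
      by (cases j) (simp_all add: x tensor3_def)
    have main: "p x = (tensor3 (\<lambda>i. if i = u then 0 else 1) (\<lambda>_. 1) (\<lambda>_. 1) x
        + tensor3 (\<lambda>i. if i = u then 1 else 0) (\<lambda>j. if j = v then 1 else 0) (\<lambda>k. p (u,v,k) / p (\<not>u,v,k)) x)
      * p (\<not>u, j, k)"
    proof (cases "i = u")
      case False
      then have "i = (\<not>u)" by auto
      then show ?thesis using False by (simp add: x tensor3_def)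
    next
      case True
      show ?thesis
      proof (cases "j = v")
        case False
        then have "j = (\<not>v)" by auto
        then show ?thesis using True h1 by (simp add: x tensor3_def)
      next
        case jv: True
        show ?thesis
        proof (cases "p (\<not>u, v, k) = 0")
          case True
          then show ?thesis using h2 \<open>i = u\<close> jv by (simp add: x tensor3_def)
        next
          case False
          then show ?thesis using \<open>i = u\<close> jv by (simp add: x tensor3_def)
        qed
      qed
    qed
    show "p x = (tensor3 (\<lambda>i. if i = u then 0 else 1) (\<lambda>_. 1) (\<lambda>_. 1) x
        + tensor3 (\<lambda>i. if i = u then 1 else 0) (\<lambda>j. if j = v then 1 else 0) (\<lambda>k. p (u,v,k) / p (\<not>u,v,k)) x)
      * (tensor3 (\<lambda>_. 1) (\<lambda>j. if j then 0 else 1) (\<lambda>k. p (\<not>u,False,k)) x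
        + tensor3 (\<lambda>_. 1) (\<lambda>j. if j then 1 else 0) (\<lambda>k. p (\<not>u,True,k)) x)"
      using main T2 by simp
  qed
qed (use nn in \<open>auto simp: nonneg2_def\<close>)

lemma TB_rep:
  assumes nn: "\<forall>x. 0 \<le> p x" and c: "TBc p a b"
  shows "rep p"
  unfolding rep_def
proof (intro exI conjI)
  show "\<forall>x. p x = (tensor3 (\<lambda>_. 1) (\<lambda>_. 1) (\<lambda>_. 1) x + tensor3 (\<lambda>_. 0) (\<lambda>_. 0) (\<lambda>_. 0) x)
      * (tensor3 (\<lambda>i. if i = a then 1 else 0) (\<lambda>j. if j = b then 1 else 0) (\<lambda>k. p (a,b,k)) x
        + tensor3 (\<lambda>i. if i = a then 0 else 1) (\<lambda>j. if j = b then 0 else 1) (\<lambda>k. p (\<not>a,\<not>b,k)) x)"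
  proof
    fix x :: state3
    obtain i j k where x: "x = (i,j,k)" by (cases x) auto
    have h: "p (a, \<not>b, k) = 0" "p (\<not>a, b, k) = 0" using c unfolding TBc_def by auto
    show "p x = (tensor3 (\<lambda>_. 1) (\<lambda>_. 1) (\<lambda>_. 1) x + tensor3 (\<lambda>_. 0) (\<lambda>_. 0) (\<lambda>_. 0) x)
      * (tensor3 (\<lambda>i. if i = a then 1 else 0) (\<lambda>j. if j = b then 1 else 0) (\<lambda>k. p (a,b,k)) x
        + tensor3 (\<lambda>i. if i = a then 0 else 1) (\<lambda>j. if j = b then 0 else 1) (\<lambda>k. p (\<not>a,\<not>b,k)) x)"
      using h by (cases i; cases j; cases a; cases b) (simp_all add: x tensor3_def)
  qed
qed (use nn in \<open>auto simp: nonneg2_def\<close>)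


lemma set3: "{i::nat. i < 3 \<and> P i} = (if P 0 then {0} else {}) \<union> (if P 1 then {1} else {}) \<union> (if P 2 then {2} else {})"
proof (rule set_eqI, rule iffI)
  fix x :: nat
  assume "x \<in> {i::nat. i < 3 \<and> P i}"
  then have "x = 0 \<or> x = 1 \<or> x = 2" and "P x" by auto
  then show "x \<in> (if P 0 then {0} else {}) \<union> (if P 1 then {1} else {}) \<union> (if P 2 then {2} else {})"
    by (elim disjE) simp_all
next
  fix x :: nat
  assume "x \<in> (if P 0 then {0} else {}) \<union> (if P 1 then {1} else {}) \<union> (if P 2 then {2} else {})"
  then show "x \<in> {i::nat. i < 3 \<and> P i}" by (auto split: if_splits)
qed

lemma ham_iff: "hamming_neighbour x y \<longleftrightarrow>
   (y = (\<not> fst x, fst (snd x), snd (snd x)) \<or> y = (fst x, \<not> fst (snd x), snd (snd x)) \<or> y = (fst x, fst (snd x), \<not> snd (snd x)))"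
  unfolding hamming_neighbour_def set3
  by (cases x; cases y) (auto split: if_splits)

lemma zero_nb:
  assumes n: "nonneg2 a" "nonneg2 b" "nonneg2 c" "nonneg2 d" "nonneg2 e" "nonneg2 f"
    and z: "tensor3 a b c x + tensor3 d e f x = 0"
  shows "\<exists>y. hamming_neighbour x y \<and> tensor3 a b c y + tensor3 d e f y = 0"
proof -
  obtain i j k where x: "x = (i,j,k)" by (cases x) auto
  have nn: "\<And>i j k. 0 \<le> a i * b j * c k" "\<And>i j k. 0 \<le> d i * e j * f k"
    using n by (auto simp: nonneg2_def)
  have s: "a i * b j * c k + d i * e j * f k = 0" using z by (simp add: x tensor3_def)
  have "a i * b j * c k = 0" "d i * e j * f k = 0"
    using s nn[of i j k] by linarith+
  then have h1: "a i = 0 \<or> b j = 0 \<or> c k = 0" and h2: "d i = 0 \<or> e j = 0 \<or> f k = 0" by auto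
  have "tensor3 a b c (\<not>i,j,k) + tensor3 d e f (\<not>i,j,k) = 0 \<or>
        tensor3 a b c (i,\<not>j,k) + tensor3 d e f (i,\<not>j,k) = 0 \<or>
        tensor3 a b c (i,j,\<not>k) + tensor3 d e f (i,j,\<not>k) = 0"
    using h1 h2 by (elim disjE) (simp_all add: tensor3_def)
  then show ?thesis unfolding ham_iff x by (simp only: fst_conv snd_conv) blast
qed

lemma fwd:
  assumes "rep p" "p x = 0"
  shows "\<exists>y. hamming_neighbour x y \<and> p y = 0"
proof -
  from assms(1)[unfolded rep_def] obtain a1 b1 c1 d1 e1 f1 a2 b2 c2 d2 e2 f2 where
    n: "nonneg2 a1" "nonneg2 b1" "nonneg2 c1" "nonneg2 d1" "nonneg2 e1" "nonneg2 f1"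
       "nonneg2 a2" "nonneg2 b2" "nonneg2 c2" "nonneg2 d2" "nonneg2 e2" "nonneg2 f2"
    and e: "\<forall>x. p x = (tensor3 a1 b1 c1 x + tensor3 d1 e1 f1 x) * (tensor3 a2 b2 c2 x + tensor3 d2 e2 f2 x)"
    by (elim exE conjE) (rule that; assumption)
  have "tensor3 a1 b1 c1 x + tensor3 d1 e1 f1 x = 0 \<or> tensor3 a2 b2 c2 x + tensor3 d2 e2 f2 x = 0"
    using e[rule_format, of x] assms(2) by simp
  then show ?thesis
  proof
    assume "tensor3 a1 b1 c1 x + tensor3 d1 e1 f1 x = 0"
    from zero_nb[OF n(1-6) this] obtain y where "hamming_neighbour x y" "tensor3 a1 b1 c1 y + tensor3 d1 e1 f1 y = 0" by blast
    then show ?thesis using e[rule_format, of y] by (metis mult_eq_0_iff)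
  next
    assume "tensor3 a2 b2 c2 x + tensor3 d2 e2 f2 x = 0"
    from zero_nb[OF n(7-12) this] obtain y where "hamming_neighbour x y" "tensor3 a2 b2 c2 y + tensor3 d2 e2 f2 y = 0" by blast
    then show ?thesis using e[rule_format, of y] by (metis mult_eq_0_iff)
  qed
qed

definition D :: "(state3 \<Rightarrow> real) \<Rightarrow> bool" where
  "D p \<longleftrightarrow> (\<exists>u v. TAc p u v \<or> TAc (s12 p) u v \<or> TAc (s23 p) u v \<or> TAc (s12 (s23 p)) u v
       \<or> TAc (s23 (s12 p)) u v \<or> TAc (s12 (s23 (s12 p))) u v
       \<or> TBc p u v \<or> TBc (s12 p) u v \<or> TBc (s23 p) u v \<or> TBc (s12 (s23 p)) u v
       \<or> TBc (s23 (s12 p)) u v \<or> TBc (s12 (s23 (s12 p))) u v)"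

lemma nn_s: "\<forall>x. 0 \<le> p x \<Longrightarrow> \<forall>x. 0 \<le> s12 p x" "\<forall>x. 0 \<le> p x \<Longrightarrow> \<forall>x. 0 \<le> s23 p x"
  by (auto simp: s12_def s23_def split: prod.splits)

lemma rep_any: "rep q \<Longrightarrow> rep q"  by simp

lemma D_rep: assumes nn: "\<forall>x. 0 \<le> p x" and "D p" shows "rep p"
proof -
  have n1: "\<forall>x. 0 \<le> s12 p x" "\<forall>x. 0 \<le> s23 p x" "\<forall>x. 0 \<le> s12 (s23 p) x" "\<forall>x. 0 \<le> s23 (s12 p) x"
     "\<forall>x. 0 \<le> s12 (s23 (s12 p)) x"
    using nn_s nn by metis+
  have r: "rep (s12 p) \<Longrightarrow> rep p" "rep (s23 p) \<Longrightarrow> rep p" "rep (s12 (s23 p)) \<Longrightarrow> rep p"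
    "rep (s23 (s12 p)) \<Longrightarrow> rep p" "rep (s12 (s23 (s12 p))) \<Longrightarrow> rep p"
    using rep_s12 rep_s23 by metis+
  from assms(2) obtain u v where
    "TAc p u v \<or> TAc (s12 p) u v \<or> TAc (s23 p) u v \<or> TAc (s12 (s23 p)) u v
       \<or> TAc (s23 (s12 p)) u v \<or> TAc (s12 (s23 (s12 p))) u v
       \<or> TBc p u v \<or> TBc (s12 p) u v \<or> TBc (s23 p) u v \<or> TBc (s12 (s23 p)) u v
       \<or> TBc (s23 (s12 p)) u v \<or> TBc (s12 (s23 (s12 p))) u v" unfolding D_def by blast
  then show ?thesis
  proof (elim disjE)
    assume "TAc (p) u v" then show ?thesis by (rule TA_rep[OF nn])
  next
    assume "TAc (s12 p) u v" then show ?thesis by (rule r(1)[OF TA_rep[OF n1(1)]])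
  next
    assume "TAc (s23 p) u v" then show ?thesis by (rule r(2)[OF TA_rep[OF n1(2)]])
  next
    assume "TAc (s12 (s23 p)) u v" then show ?thesis by (rule r(3)[OF TA_rep[OF n1(3)]])
  next
    assume "TAc (s23 (s12 p)) u v" then show ?thesis by (rule r(4)[OF TA_rep[OF n1(4)]])
  next
    assume "TAc (s12 (s23 (s12 p))) u v" then show ?thesis by (rule r(5)[OF TA_rep[OF n1(5)]])
  next
    assume "TBc (p) u v" then show ?thesis by (rule TB_rep[OF nn])
  next
    assume "TBc (s12 p) u v" then show ?thesis by (rule r(1)[OF TB_rep[OF n1(1)]])
  next
    assume "TBc (s23 p) u v" then show ?thesis by (rule r(2)[OF TB_rep[OF n1(2)]])
  next
    assume "TBc (s12 (s23 p)) u v" then show ?thesis by (rule r(3)[OF TB_rep[OF n1(3)]])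
  next
    assume "TBc (s23 (s12 p)) u v" then show ?thesis by (rule r(4)[OF TB_rep[OF n1(4)]])
  next
    assume "TBc (s12 (s23 (s12 p))) u v" then show ?thesis by (rule r(5)[OF TB_rep[OF n1(5)]])
  qed
qed

lemma cond_D:
  assumes ex: "\<exists>x. p x = 0" and c0: "\<forall>x. p x = 0 \<longrightarrow> (\<exists>y. hamming_neighbour x y \<and> p y = 0)"
  shows "D p"
proof -
  have ex': "p (False,False,False) = 0 \<or> p (False,False,True) = 0 \<or> p (False,True,False) = 0 \<or> p (False,True,True) = 0 \<or> p (True,False,False) = 0 \<or> p (True,False,True) = 0 \<or> p (True,True,False) = 0 \<or> p (True,True,True) = 0"
    using ex by (metis (full_types) prod_cases3)
  have h0: "p (False,False,False) = 0 \<longrightarrow> p (True,False,False) = 0 \<or> p (False,True,False) = 0 \<or> p (False,False,True) = 0"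
    using c0[rule_format, of "(False,False,False)"] unfolding ham_iff by auto
  have h1: "p (False,False,True) = 0 \<longrightarrow> p (True,False,True) = 0 \<or> p (False,True,True) = 0 \<or> p (False,False,False) = 0"
    using c0[rule_format, of "(False,False,True)"] unfolding ham_iff by auto
  have h2: "p (False,True,False) = 0 \<longrightarrow> p (True,True,False) = 0 \<or> p (False,False,False) = 0 \<or> p (False,True,True) = 0"
    using c0[rule_format, of "(False,True,False)"] unfolding ham_iff by auto
  have h3: "p (False,True,True) = 0 \<longrightarrow> p (True,True,True) = 0 \<or> p (False,False,True) = 0 \<or> p (False,True,False) = 0"
    using c0[rule_format, of "(False,True,True)"] unfolding ham_iff by auto
  have h4: "p (True,False,False) = 0 \<longrightarrow> p (False,False,False) = 0 \<or> p (True,True,False) = 0 \<or> p (True,False,True) = 0"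
    using c0[rule_format, of "(True,False,False)"] unfolding ham_iff by auto
  have h5: "p (True,False,True) = 0 \<longrightarrow> p (False,False,True) = 0 \<or> p (True,True,True) = 0 \<or> p (True,False,False) = 0"
    using c0[rule_format, of "(True,False,True)"] unfolding ham_iff by auto
  have h6: "p (True,True,False) = 0 \<longrightarrow> p (False,True,False) = 0 \<or> p (True,False,False) = 0 \<or> p (True,True,True) = 0"
    using c0[rule_format, of "(True,True,False)"] unfolding ham_iff by auto
  have h7: "p (True,True,True) = 0 \<longrightarrow> p (False,True,True) = 0 \<or> p (True,False,True) = 0 \<or> p (True,True,False) = 0"
    using c0[rule_format, of "(True,True,True)"] unfolding ham_iff by auto
  show ?thesis using ex' h0 h1 h2 h3 h4 h5 h6 h7
    unfolding D_def TAc_def TBc_def s12_def s23_def ex_bool_eq all_bool_eq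
    by (cases "p (False,False,False) = 0"; cases "p (False,False,True) = 0"; cases "p (False,True,False) = 0"; cases "p (False,True,True) = 0"; cases "p (True,False,False) = 0"; cases "p (True,False,True) = 0"; cases "p (True,True,False) = 0"; cases "p (True,True,True) = 0") simp_all
qed


theorem mainTheorem8:
  fixes p :: "state3 \<Rightarrow> real"
  assumes "p \<in> simplex7"
    and "\<exists>x. p x = 0"
  shows "p \<in> RBM32 \<longleftrightarrow> (\<forall>x. p x = 0 \<longrightarrow> (\<exists>y. hamming_neighbour x y \<and> p y = 0))"
proof
  assume "p \<in> RBM32"
  then have "rep p" by (simp add: RBM32_rep)
  then show "\<forall>x. p x = 0 \<longrightarrow> (\<exists>y. hamming_neighbour x y \<and> p y = 0)" using fwd by blast
next
  assume c: "\<forall>x. p x = 0 \<longrightarrow> (\<exists>y. hamming_neighbour x y \<and> p y = 0)"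
  have nn: "\<forall>x. 0 \<le> p x" using assms(1) by (simp add: simplex7_def)
  have "rep p" by (rule D_rep[OF nn cond_D[OF assms(2) c]])
  then show "p \<in> RBM32" using assms(1) by (simp add: RBM32_rep)
qed

end
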